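(* Let $G$ be a group and let $(\hat{X},Z)$ be a pair such that: (1) $\hat{X}$ is a compact AR; (2) $\hat{X}$ is a $\mathscr{Z}$-compactification of $X=\hat{X}-Z$; (3) $G$ acts properly and cocompactly on $X$ (not necessarily freely); (4) (nullity condition) for every compact set $C\subseteq X$ and every open cover $\mathscr{U}$ of $\hat{X}$, all but finitely many $G$-translates of $C$ lie in a single element of $\mathscr{U}$. Then $\dim Z<\infty$ (Lebesgue covering dimension).
   Context: All spaces are locally compact, separable and metrizable. A separable metric space is an AR if whenever it is embedded as a closed subset of another separable metric space, its image is a retract of that space; it is an ANR if some neighborhood of the image retracts onto it. A closed subset $A$ of an ANR $Y$ is a $\mathscr{Z}$-set if there is a homotopy $H:Y\times[0,1]\to Y$ with $H_0=\mathrm{id}_Y$ and $H_t(Y)\subset Y-A$ for all $t>0$. A $\mathscr{Z}$-compactification of $Y$ is a compactification $\hat{Y}$ such that $\hat{Y}-Y$ is a $\mathscr{Z}$-set in $\hat{Y}$. A pair as in the claim is a $\mathscr{Z}$-structure on $G$ in the sense of Dranishnikov. *)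

theory Defs
  imports "HOL-Analysis.Analysis" "HOL-Algebra.Group_Action"
begin

text \<open>Every separable metric space has cardinality at most that of the continuum,
  so up to homeomorphism every separable metric space is a topology on a subset
  of the type real; hence quantifying over (separable metrizable) topologies on
  real captures all ambient separable metric spaces.\<close>

definition AR_space :: "'a topology \<Rightarrow> bool" where
  "AR_space T \<longleftrightarrow> metrizable_space T \<and> separable_space T \<and>
     (\<forall>(U::real topology) e. metrizable_space U \<and> separable_space U \<and>
        embedding_map T U e \<and> closedin U (e ` topspace T)
        \<longrightarrow> (e ` topspace T) retract_of_space U)"

definition ANR_space :: "'a topology \<Rightarrow> bool" where
  "ANR_space T \<longleftrightarrow> metrizable_space T \<and> separable_space T \<and>
     (\<forall>(U::real topology) e. metrizable_space U \<and> separable_space U \<and>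
        embedding_map T U e \<and> closedin U (e ` topspace T)
        \<longrightarrow> (\<exists>W. openin U W \<and> e ` topspace T \<subseteq> W \<and>
                 (e ` topspace T) retract_of_space (subtopology U W)))"

definition Z_set :: "'a topology \<Rightarrow> 'a set \<Rightarrow> bool" where
  "Z_set Y A \<longleftrightarrow> ANR_space Y \<and> closedin Y A \<and>
     (\<exists>H. continuous_map (prod_topology Y (top_of_set {0..1::real})) Y H \<and>
          (\<forall>y\<in>topspace Y. H (y, 0) = y) \<and>
          (\<forall>t\<in>{0<..1}. \<forall>y\<in>topspace Y. H (y, t) \<in> topspace Y - A))"

definition Z_compactification :: "'a topology \<Rightarrow> 'a set \<Rightarrow> bool" where
  "Z_compactification Xh X \<longleftrightarrow> compact_space Xh \<and> Hausdorff_space Xh \<and>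
     X \<subseteq> topspace Xh \<and> Xh closure_of X = topspace Xh \<and>
     Z_set Xh (topspace Xh - X)"

definition covering_dim_le :: "'a topology \<Rightarrow> nat \<Rightarrow> bool" where
  "covering_dim_le T n \<longleftrightarrow>
     (\<forall>\<U>. finite \<U> \<and> (\<forall>U\<in>\<U>. openin T U) \<and> topspace T \<subseteq> \<Union>\<U> \<longrightarrow>
       (\<exists>\<V>. finite \<V> \<and> (\<forall>V\<in>\<V>. openin T V) \<and> topspace T \<subseteq> \<Union>\<V> \<and>
            (\<forall>V\<in>\<V>. \<exists>U\<in>\<U>. V \<subseteq> U) \<and>
            (\<forall>x\<in>topspace T. card {V\<in>\<V>. x \<in> V} \<le> n + 1)))"

definition finite_covering_dim :: "'a topology \<Rightarrow> bool" where
  "finite_covering_dim T \<longleftrightarrow> (\<exists>n. covering_dim_le T n)"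

definition continuous_action :: "('g, 'm) monoid_scheme \<Rightarrow> 'a topology \<Rightarrow> ('g \<Rightarrow> 'a \<Rightarrow> 'a) \<Rightarrow> bool" where
  "continuous_action G X \<phi> \<longleftrightarrow> group_action G (topspace X) \<phi> \<and>
     (\<forall>g\<in>carrier G. continuous_map X X (\<phi> g))"

definition proper_action :: "('g, 'm) monoid_scheme \<Rightarrow> 'a topology \<Rightarrow> ('g \<Rightarrow> 'a \<Rightarrow> 'a) \<Rightarrow> bool" where
  "proper_action G X \<phi> \<longleftrightarrow>
     (\<forall>K. compactin X K \<longrightarrow> finite {g \<in> carrier G. \<phi> g ` K \<inter> K \<noteq> {}})"

definition cocompact_action :: "('g, 'm) monoid_scheme \<Rightarrow> 'a topology \<Rightarrow> ('g \<Rightarrow> 'a \<Rightarrow> 'a) \<Rightarrow> bool" where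
  "cocompact_action G X \<phi> \<longleftrightarrow>
     (\<exists>K. compactin X K \<and> (\<Union>g\<in>carrier G. \<phi> g ` K) = topspace X)"

definition nullity_condition :: "('g, 'm) monoid_scheme \<Rightarrow> 'a topology \<Rightarrow> 'a set \<Rightarrow> ('g \<Rightarrow> 'a \<Rightarrow> 'a) \<Rightarrow> bool" where
  "nullity_condition G Xh X \<phi> \<longleftrightarrow>
     (\<forall>C \<U>. compactin (subtopology Xh X) C \<and> (\<forall>U\<in>\<U>. openin Xh U) \<and> topspace Xh \<subseteq> \<Union>\<U>
        \<longrightarrow> finite {g \<in> carrier G. \<not> (\<exists>U\<in>\<U>. \<phi> g ` C \<subseteq> U)})"

end

theory Submission
  imports Defs
begin

lemma tube_ev:
  assumes H: "continuous_map (prod_topology Y (top_of_set {0..1::real})) Y H"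
    and H0: "\<forall>y\<in>topspace Y. H (y, 0) = y"
    and T: "compactin Y T" and Ob: "openin Y Ob" and TO: "T \<subseteq> Ob"
  shows "eventually (\<lambda>t. \<forall>z\<in>T. H (z, t) \<in> Ob) (at_right 0)"
proof -
  define W where "W = {p \<in> topspace (prod_topology Y (top_of_set {0..1::real})). H p \<in> Ob}"
  have W: "openin (prod_topology Y (top_of_set {0..1::real})) W"
    unfolding W_def using openin_continuous_map_preimage[OF H Ob] by simp
  have Ts: "T \<subseteq> topspace Y" using T compactin_subset_topspace by blast
  have "T \<times> {0} \<subseteq> W" using Ts TO H0 unfolding W_def by (force simp: subset_iff)
  then obtain U V where UV: "openin Y U" "openin (top_of_set {0..1::real}) V" "T \<subseteq> U" "0 \<in> V" "U \<times> V \<subseteq> W"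
    using tube_lemma_left[OF W T, of 0] by auto
  then obtain S where S: "open S" "V = {0..1} \<inter> S" by (auto simp: openin_open)
  then obtain e where e: "e > 0" "ball 0 e \<subseteq> S" using UV(4) open_contains_ball by blast
  show ?thesis unfolding eventually_at_right_field
  proof (intro exI[of _ "min e 1"] conjI allI impI ballI)
    show "0 < min e (1::real)" using e by simp
    fix y z assume y: "0 < y" "y < min e (1::real)" and z: "z \<in> T"
    have "y \<in> V" using y e S by (auto simp: dist_real_def)
    then have "(z, y) \<in> W" using UV z by blast
    then show "H (z, y) \<in> Ob" unfolding W_def by auto
  qed
qed

theorem corollary3p3:
  fixes G :: "('g, 'm) monoid_scheme"
    and Xh :: "'a topology"
    and Z :: "'a set"
    and \<phi> :: "'g \<Rightarrow> 'a \<Rightarrow> 'a"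
  defines "X \<equiv> topspace Xh - Z"
  assumes "group G"
    and "Z \<subseteq> topspace Xh"
    and "compact_space Xh"
    and "AR_space Xh"
    and "Z_compactification Xh X"
    and "continuous_action G (subtopology Xh X) \<phi>"
    and "proper_action G (subtopology Xh X) \<phi>"
    and "cocompact_action G (subtopology Xh X) \<phi>"
    and "nullity_condition G Xh X \<phi>"
  shows "finite_covering_dim (subtopology Xh Z)"
proof -
  note grpG = assms(2) and Zsub = assms(3) and cpt = assms(4)
  interpret grp: group G by (rule grpG)
  have Xsub: "X \<subseteq> topspace Xh" unfolding X_def by auto
  have tsX: "topspace (subtopology Xh X) = X" using Xsub by auto
  have tsZ: "topspace (subtopology Xh Z) = Z" using Zsub by auto
  have ZX: "topspace Xh - X = Z" unfolding X_def using Zsub by auto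
  have Haus: "Hausdorff_space Xh" and Zs0: "Z_set Xh (topspace Xh - X)"
    using assms(6) unfolding Z_compactification_def by blast+
  have Zs: "Z_set Xh Z" using Zs0 by (simp only: ZX)
  have nrm: "normal_space Xh" by (rule compact_Hausdorff_or_regular_imp_normal_space[OF cpt]) (simp add: Haus)
  have Zcl: "closedin Xh Z" using Zs unfolding Z_set_def by auto
  obtain H where Hc: "continuous_map (prod_topology Xh (top_of_set {0..1::real})) Xh H"
    and H0: "\<forall>y\<in>topspace Xh. H (y, 0) = y"
    and Ht: "\<forall>t\<in>{0<..1}. \<forall>y\<in>topspace Xh. H (y, t) \<in> topspace Xh - Z"
    using Zs unfolding Z_set_def by blast
  have Xop: "openin Xh X" using Zcl unfolding X_def by (simp add: openin_diff)
  have ga: "group_action G X \<phi>" and contg: "\<And>g. g \<in> carrier G \<Longrightarrow> continuous_map (subtopology Xh X) (subtopology Xh X) (\<phi> g)"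
    using assms(7) tsX unfolding continuous_action_def by auto
  interpret ga: group_action G X \<phi> by (rule ga)
  have act_inv: "\<phi> g (\<phi> (inv\<^bsub>G\<^esub> g) y) = y" if "g \<in> carrier G" "y \<in> X" for g y
  proof -
    have "\<phi> g (\<phi> (inv\<^bsub>G\<^esub> g) y) = \<phi> (g \<otimes>\<^bsub>G\<^esub> inv\<^bsub>G\<^esub> g) y"
      using ga.composition_rule[of y g "inv\<^bsub>G\<^esub> g"] that by simp
    also have "\<dots> = \<phi> \<one>\<^bsub>G\<^esub> y" using that by simp
    also have "\<dots> = y" using ga.id_eq_one[symmetric] that by (metis restrict_apply')
    finally show ?thesis .
  qed
  have act_inv2: "\<phi> (inv\<^bsub>G\<^esub> g) (\<phi> g y) = y" if "g \<in> carrier G" "y \<in> X" for g y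
    using act_inv[of "inv\<^bsub>G\<^esub> g" y] that by simp
  have act_in: "\<phi> g y \<in> X" if "g \<in> carrier G" "y \<in> X" for g y
    using ga.element_image that by blast
  obtain K where Kc: "compactin (subtopology Xh X) K" and KU: "(\<Union>g\<in>carrier G. \<phi> g ` K) = X"
    using assms(9) tsX unfolding cocompact_action_def by auto
  have KcX: "compactin Xh K" and KX: "K \<subseteq> X" using Kc by (simp_all add: compactin_subtopology)
  have Kcl: "closedin Xh K" using compactin_imp_closedin[OF Haus KcX] .
  have "\<exists>V. openin Xh V \<and> K \<subseteq> V \<and> Xh closure_of V \<subseteq> X"
    using nrm[unfolded normal_space_alt, rule_format, OF conjI[OF Kcl conjI[OF Xop KX]]] .
  then obtain U' where U': "openin Xh U'" "K \<subseteq> U'" "Xh closure_of U' \<subseteq> X"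
    by blast
  define C where "C = Xh closure_of U'"
  have U'C: "U' \<subseteq> C" unfolding C_def using closure_of_subset[OF openin_subset[OF U'(1)]] .
  have CX: "C \<subseteq> X" using U'(3) unfolding C_def .
  have CcX: "compactin Xh C" unfolding C_def by (simp add: closedin_compact_space cpt)
  have Cc: "compactin (subtopology Xh X) C" using CcX CX by (simp add: compactin_subtopology)
  have U'o: "openin (subtopology Xh X) U'" unfolding openin_subtopology
    using U'(1) U'C CX by (intro exI[of _ U']) auto
  define P where "P = {g \<in> carrier G. \<phi> g ` C \<inter> C \<noteq> {}}"
  have Pfin: "finite P" using assms(8)[unfolded proper_action_def, rule_format, OF Cc] unfolding P_def .
  show ?thesis unfolding finite_covering_dim_def
  proof (intro exI[of _ "card P"])
    show "covering_dim_le (subtopology Xh Z) (card P)"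
      unfolding covering_dim_le_def tsZ
    proof (intro allI impI)
      fix \<U> assume "finite \<U> \<and> (\<forall>U\<in>\<U>. openin (subtopology Xh Z) U) \<and> Z \<subseteq> \<Union>\<U>"
      then have Uo: "\<And>U. U \<in> \<U> \<Longrightarrow> openin (subtopology Xh Z) U" and Ucov: "Z \<subseteq> \<Union>\<U>" by auto
      define \<A>0 where "\<A>0 = {A. openin Xh A \<and> (\<exists>U\<in>\<U>. Xh closure_of A \<inter> Z \<subseteq> U)}"
      have "Z \<subseteq> \<Union>\<A>0"
      proof
        fix z assume z: "z \<in> Z"
        then obtain U where U: "U \<in> \<U>" "z \<in> U" using Ucov by auto
        have "\<exists>T. openin Xh T \<and> U = T \<inter> Z" using Uo[OF U(1)] by (simp add: openin_subtopology)
        then obtain T where T: "openin Xh T" "U = T \<inter> Z" by blast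
        have cz: "closedin Xh {z}"
          by (rule closedin_t1_singleton[OF Hausdorff_imp_t1_space[OF Haus]]) (use z Zsub in auto)
        have zT: "{z} \<subseteq> T" using T U by auto
        have "\<exists>A. openin Xh A \<and> {z} \<subseteq> A \<and> Xh closure_of A \<subseteq> T"
          using nrm[unfolded normal_space_alt, rule_format, OF conjI[OF cz conjI[OF T(1) zT]]] .
        then obtain A where A: "openin Xh A" "{z} \<subseteq> A" "Xh closure_of A \<subseteq> T"
          by blast
        then have "A \<in> \<A>0" unfolding \<A>0_def using T U by blast
        then show "z \<in> \<Union>\<A>0" using A by auto
      qed
      moreover have Zc: "compactin Xh Z" by (rule closedin_compact_space[OF cpt Zcl])
      ultimately obtain \<A> where \<A>: "finite \<A>" "\<A> \<subseteq> \<A>0" "Z \<subseteq> \<Union>\<A>"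
        using compactinD[OF Zc, of \<A>0] unfolding \<A>0_def by auto
      have Ao: "\<And>A. A \<in> \<A> \<Longrightarrow> openin Xh A" using \<A> unfolding \<A>0_def by auto
      define u where "u A = (SOME U. U \<in> \<U> \<and> Xh closure_of A \<inter> Z \<subseteq> U)" for A
      have u: "u A \<in> \<U> \<and> Xh closure_of A \<inter> Z \<subseteq> u A" if "A \<in> \<A>" for A
        unfolding u_def by (rule someI_ex) (use \<A> that in \<open>auto simp: \<A>0_def\<close>)
      have "openin Xh (\<Union>\<A>)" using Ao by (simp add: openin_Union)
      then have cl: "closedin Xh (topspace Xh - \<Union>\<A>)" by (simp add: closedin_diff)
      have dj: "disjnt Z (topspace Xh - \<Union>\<A>)" using \<A> by (auto simp: disjnt_def)
      have "\<exists>D E. openin Xh D \<and> openin Xh E \<and> Z \<subseteq> D \<and> topspace Xh - \<Union>\<A> \<subseteq> E \<and> disjnt D E"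
        using nrm[unfolded normal_space_def, rule_format, OF conjI[OF Zcl conjI[OF cl dj]]] .
      then obtain D E where DE: "openin Xh D" "openin Xh E" "Z \<subseteq> D" "topspace Xh - \<Union>\<A> \<subseteq> E" "disjnt D E"
        by blast
      define \<W> where "\<W> = insert E \<A>"
      have Wo: "\<forall>W\<in>\<W>. openin Xh W" using DE Ao unfolding \<W>_def by auto
      have Wcov: "topspace Xh \<subseteq> \<Union>\<W>" using DE unfolding \<W>_def by auto
      define Bad where "Bad = {g \<in> carrier G. \<not> (\<exists>W\<in>\<W>. \<phi> g ` C \<subseteq> W)}"
      have Badfin: "finite Bad" using assms(10)[unfolded nullity_condition_def, rule_format, OF conjI[OF Cc conjI[OF Wo Wcov]]] unfolding Bad_def .
      define Q where "Q = (\<Union>g\<in>Bad. \<phi> g ` C)"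
      have "compactin Xh Q" unfolding Q_def
      proof (rule compactin_Union)
        show "finite ((\<lambda>g. \<phi> g ` C) ` Bad)" using Badfin by simp
        fix S assume "S \<in> (\<lambda>g. \<phi> g ` C) ` Bad"
        then obtain g where g: "g \<in> carrier G" "S = \<phi> g ` C" unfolding Bad_def by auto
        have "compactin (subtopology Xh X) S" using image_compactin[OF Cc contg[OF g(1)]] g by simp
        then show "compactin Xh S" by (simp add: compactin_subtopology)
      qed
      then have Qcl: "closedin Xh Q" by (rule compactin_imp_closedin[OF Haus])
      have QX: "Q \<subseteq> X" unfolding Q_def Bad_def using CX act_in by auto
      have "eventually (\<lambda>t. (\<forall>z\<in>Z. H (z, t) \<in> D) \<and> (\<forall>z\<in>Z. H (z, t) \<in> topspace Xh - Q) \<and>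
              (\<forall>A\<in>\<A>. \<forall>z\<in>Z - u A. H (z, t) \<in> topspace Xh - Xh closure_of A) \<and> 0 < t \<and> t < 1) (at_right 0)"
      proof (intro eventually_conj)
        show "eventually (\<lambda>t. \<forall>z\<in>Z. H (z, t) \<in> D) (at_right 0)"
          using tube_ev[OF Hc H0 Zc DE(1) DE(3)] .
        show "eventually (\<lambda>t. \<forall>z\<in>Z. H (z, t) \<in> topspace Xh - Q) (at_right 0)"
        proof (rule tube_ev[OF Hc H0 Zc])
          show "openin Xh (topspace Xh - Q)" using Qcl by (simp add: openin_diff)
          show "Z \<subseteq> topspace Xh - Q" using QX Zsub unfolding X_def by auto
        qed
        show "eventually (\<lambda>t. \<forall>A\<in>\<A>. \<forall>z\<in>Z - u A. H (z, t) \<in> topspace Xh - Xh closure_of A) (at_right 0)"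
        proof (rule eventually_ball_finite[OF \<A>(1)], intro ballI)
          fix A assume A: "A \<in> \<A>"
          have "closedin (subtopology Xh Z) (topspace (subtopology Xh Z) - u A)"
            using closedin_diff[OF closedin_topspace Uo[OF conjunct1[OF u[OF A]]]] .
          then have "closedin (subtopology Xh Z) (Z - u A)" by (simp only: tsZ)
          then have "compactin Xh (Z - u A)" by (rule closedin_compact_space[OF cpt closedin_trans_full[OF _ Zcl]])
          moreover have "Z - u A \<subseteq> topspace Xh - Xh closure_of A" using u[OF A] Zsub by auto
          ultimately show "eventually (\<lambda>t. \<forall>z\<in>Z - u A. H (z, t) \<in> topspace Xh - Xh closure_of A) (at_right 0)"
            by (rule tube_ev[OF Hc H0 _ openin_diff[OF openin_topspace closedin_closure_of]])
        qed
        show "eventually (\<lambda>t. 0 < t) (at_right (0::real))" by (rule eventually_at_right_less)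
        show "eventually (\<lambda>t. t < 1) (at_right (0::real))"
          unfolding eventually_at_right_field by (intro exI[of _ 1]) auto
      qed
      then obtain b :: real where b: "b > 0" and bP: "\<And>y. y > 0 \<Longrightarrow> y < b \<Longrightarrow> (\<forall>z\<in>Z. H (z, y) \<in> D) \<and> (\<forall>z\<in>Z. H (z, y) \<in> topspace Xh - Q) \<and>
              (\<forall>A\<in>\<A>. \<forall>z\<in>Z - u A. H (z, y) \<in> topspace Xh - Xh closure_of A) \<and> 0 < y \<and> y < 1"
        unfolding eventually_at_right_field by blast
      define t where "t = b / 2"
      have "t > 0" "t < b" using b unfolding t_def by auto
      from bP[OF this] have t: "\<forall>z\<in>Z. H (z, t) \<in> D" "\<forall>z\<in>Z. H (z, t) \<in> topspace Xh - Q"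
          "\<forall>A\<in>\<A>. \<forall>z\<in>Z - u A. H (z, t) \<in> topspace Xh - Xh closure_of A" "0 < t" "t < 1"
        by auto
      define h where "h z = H (z, t)" for z
      have hX: "h z \<in> X" if "z \<in> Z" for z
        using Ht t(4,5) that Zsub unfolding h_def X_def by auto
      have hc: "continuous_map (subtopology Xh Z) (subtopology Xh X) h"
      proof -
        have "continuous_map Xh (prod_topology Xh (top_of_set {0..1::real})) (\<lambda>z. (z, t))"
          by (intro continuous_map_pairedI continuous_map_id) (use t(4,5) in \<open>auto simp: continuous_map_const\<close>)
        from continuous_map_compose[OF this Hc] have "continuous_map Xh Xh h"
          unfolding h_def by (simp add: o_def)
        then show ?thesis unfolding continuous_map_in_subtopology
          by (simp add: continuous_map_from_subtopology tsZ hX Pi_iff)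
      qed
      define V where "V g = {z \<in> Z. \<phi> (inv\<^bsub>G\<^esub> g) (h z) \<in> U'}" for g
      have Vo: "openin (subtopology Xh Z) (V g)" if "g \<in> carrier G" for g
      proof -
        have "continuous_map (subtopology Xh Z) (subtopology Xh X) (\<phi> (inv\<^bsub>G\<^esub> g) \<circ> h)"
          using continuous_map_compose[OF hc contg] that by simp
        from openin_continuous_map_preimage[OF this U'o] show ?thesis
          unfolding V_def tsZ by simp
      qed
      have Vcov: "Z \<subseteq> \<Union>(V ` carrier G)"
      proof
        fix z assume z: "z \<in> Z"
        then have "h z \<in> X" using hX by auto
        then obtain g k where g: "g \<in> carrier G" "k \<in> K" "h z = \<phi> g k" using KU by auto
        then have "\<phi> (inv\<^bsub>G\<^esub> g) (h z) = k" using act_inv2 KX by auto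
        then have "z \<in> V g" using z g U'(2) unfolding V_def by auto
        then show "z \<in> \<Union>(V ` carrier G)" using g by auto
      qed
      have "compactin (subtopology Xh Z) Z" using Zc by (simp add: compactin_subtopology)
      then obtain \<F> where \<F>: "finite \<F>" "\<F> \<subseteq> V ` carrier G" "Z \<subseteq> \<Union>\<F>"
        using compactinD[of "subtopology Xh Z" Z "V ` carrier G"] Vo Vcov by auto
      then obtain G0 where G0: "G0 \<subseteq> carrier G" "finite G0" "\<F> = V ` G0"
        using finite_subset_image[OF \<F>(1) \<F>(2)] by blast
      define \<V> where "\<V> = V ` G0 - {{}}"
      show "\<exists>\<V>. finite \<V> \<and> (\<forall>V\<in>\<V>. openin (subtopology Xh Z) V) \<and> Z \<subseteq> \<Union>\<V> \<and>
            (\<forall>V\<in>\<V>. \<exists>U\<in>\<U>. V \<subseteq> U) \<and> (\<forall>x\<in>Z. card {V \<in> \<V>. x \<in> V} \<le> card P + 1)"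
      proof (intro exI[of _ \<V>] conjI ballI)
        show "finite \<V>" using G0 unfolding \<V>_def by simp
        show "openin (subtopology Xh Z) W" if "W \<in> \<V>" for W using that G0 Vo unfolding \<V>_def by auto
        show "Z \<subseteq> \<Union>\<V>" using \<F> G0 unfolding \<V>_def by blast
        show "\<exists>U\<in>\<U>. W \<subseteq> U" if W: "W \<in> \<V>" for W
        proof -
          obtain g z0 where g: "g \<in> carrier G" "W = V g" "z0 \<in> V g" using W G0 unfolding \<V>_def by auto
          have z0: "z0 \<in> Z" "\<phi> (inv\<^bsub>G\<^esub> g) (h z0) \<in> U'" using g unfolding V_def by auto
          have "h z0 = \<phi> g (\<phi> (inv\<^bsub>G\<^esub> g) (h z0))" using act_inv g hX z0 by auto
          then have y0: "h z0 \<in> \<phi> g ` C" using z0 U'C by auto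
          have "h z0 \<notin> Q" using t(2) z0 unfolding h_def by auto
          then have "g \<notin> Bad" using y0 unfolding Q_def by auto
          then obtain W' where W': "W' \<in> \<W>" "\<phi> g ` C \<subseteq> W'" using g unfolding Bad_def by auto
          have "h z0 \<in> D" using t(1) z0 unfolding h_def by auto
          then have "W' \<noteq> E" using W' y0 DE(5) by (auto simp: disjnt_def)
          then have A: "W' \<in> \<A>" using W' unfolding \<W>_def by auto
          have "W \<subseteq> u W'"
          proof
            fix z assume z: "z \<in> W"
            then have zz: "z \<in> Z" "\<phi> (inv\<^bsub>G\<^esub> g) (h z) \<in> U'" using g unfolding V_def by auto
            have "h z = \<phi> g (\<phi> (inv\<^bsub>G\<^esub> g) (h z))" using act_inv g hX zz by auto
            then have "h z \<in> W'" using zz U'C W' by auto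
            then have "h z \<in> Xh closure_of W'" using closure_of_subset[OF openin_subset[OF Ao[OF A]]] by blast
            then show "z \<in> u W'" using t(3) A zz unfolding h_def by auto
          qed
          then show ?thesis using u[OF A] by blast
        qed
        fix x assume x: "x \<in> Z"
        define S where "S = {g \<in> carrier G. x \<in> V g}"
        have SP: "finite S \<and> card S \<le> card P"
        proof (cases "S = {}")
          case True then show ?thesis by simp
        next
          case False
          then obtain k where k: "k \<in> S" by auto
          define f where "f g = inv\<^bsub>G\<^esub> k \<otimes>\<^bsub>G\<^esub> g" for g
          have inj: "inj_on f S" unfolding f_def inj_on_def S_def using k S_def
            by (auto simp: grp.Units_eq)
          have "f ` S \<subseteq> P"
          proof
            fix p assume "p \<in> f ` S"
            then obtain g where g: "g \<in> S" "p = f g" by auto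
            have gc: "g \<in> carrier G" and kc: "k \<in> carrier G" using g k S_def by auto
            have hx: "h x \<in> X" using hX x by auto
            define c1 where "c1 = \<phi> (inv\<^bsub>G\<^esub> g) (h x)"
            have c1: "c1 \<in> C" "c1 \<in> X" using g S_def V_def U'C CX c1_def by auto
            have "\<phi> p c1 = \<phi> (inv\<^bsub>G\<^esub> k) (\<phi> g c1)"
              using ga.composition_rule c1 gc kc g(2) f_def by simp
            also have "\<phi> g c1 = h x" using act_inv gc hx c1_def by simp
            finally have "\<phi> p c1 \<in> C" using k S_def V_def U'C by auto
            then show "p \<in> P" using c1 gc kc g(2) f_def P_def by auto
          qed
          then have "finite (f ` S)" "card (f ` S) \<le> card P"
            using finite_subset[OF _ Pfin] card_mono[OF Pfin] by auto
          moreover have "card (f ` S) = card S" using card_image[OF inj] .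
          moreover have "finite S" using finite_imageD[OF \<open>finite (f ` S)\<close> inj] .
          ultimately show ?thesis by simp
        qed
        have "{W \<in> \<V>. x \<in> W} \<subseteq> V ` S" unfolding \<V>_def S_def using G0 by auto
        then have "card {W \<in> \<V>. x \<in> W} \<le> card (V ` S)" using card_mono[OF finite_imageI[OF conjunct1[OF SP]]] by blast
        also have "\<dots> \<le> card S" using card_image_le[OF conjunct1[OF SP]] .
        finally show "card {W \<in> \<V>. x \<in> W} \<le> card P + 1" using SP by linarith
      qed
    qed
  qed
qed

end
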